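(* Let $X$ be a locally compact Hausdorff space, let $M$ be a countably generated Hilbert $C_0(X)$-module, and let $U,V\subseteq X$ be $\sigma$-compact open sets with $V$ compactly contained in $U$ (i.e. $\overline V$ compact and $\overline V\subseteq U$). If $F$ is a submodule of $MC_0(V)$ that is a direct summand of $MC_0(U)$ (i.e. $MC_0(U)=F+ (F^\perp\cap MC_0(U))$), then $F$ is a direct summand of $M$, i.e. $M=F+F^\perp$.
   Context: $F^\perp$ denotes the orthogonal complement with respect to the $C_0(X)$-valued inner product. $MC_0(U)$ denotes the closed submodule $\overline{\mathrm{span}}\{m f: m\in M,\ f\in C_0(U)\}$. *)

theory Defs
  imports "HOL-Analysis.Analysis"
begin

definition C0 :: "('x::topological_space \<Rightarrow> complex) set" where
  "C0 = {f. continuous_on UNIV f \<and>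
             (\<forall>e>0. \<exists>K. compact K \<and> (\<forall>x. x \<notin> K \<longrightarrow> cmod (f x) < e))}"

text \<open>C_0(U) for U open, identified with the functions in C_0(X) vanishing off U.\<close>
definition C0_on :: "'x::topological_space set \<Rightarrow> ('x \<Rightarrow> complex) set" where
  "C0_on U = {f \<in> C0. \<forall>x. x \<notin> U \<longrightarrow> f x = 0}"

definition supnorm :: "('x \<Rightarrow> complex) \<Rightarrow> real" where
  "supnorm f = Sup (range (\<lambda>x. cmod (f x)))"

definition sigma_compact :: "'x::topological_space set \<Rightarrow> bool" where
  "sigma_compact U \<longleftrightarrow> (\<exists>K :: nat \<Rightarrow> 'x set. (\<forall>n. compact (K n)) \<and> U = (\<Union>n. K n))"

text \<open>A Hilbert C_0(X)-module is given by a carrier type 'm (an abelian group),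
  a complex scalar multiplication sc, a right action act of C_0(X), and a
  C_0(X)-valued inner product ip (linear in the second variable).\<close>

definition hnorm :: "('m \<Rightarrow> 'm \<Rightarrow> 'x \<Rightarrow> complex) \<Rightarrow> 'm \<Rightarrow> real" where
  "hnorm ip m = sqrt (supnorm (ip m m))"

definition hilbert_C0_module ::
  "(complex \<Rightarrow> 'm::ab_group_add \<Rightarrow> 'm) \<Rightarrow> ('m \<Rightarrow> ('x::topological_space \<Rightarrow> complex) \<Rightarrow> 'm)
   \<Rightarrow> ('m \<Rightarrow> 'm \<Rightarrow> 'x \<Rightarrow> complex) \<Rightarrow> bool" where
  "hilbert_C0_module sc act ip \<longleftrightarrow>
     \<comment> \<open>complex vector space\<close>
     (\<forall>c m n. sc c (m + n) = sc c m + sc c n) \<and>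
     (\<forall>c d m. sc (c + d) m = sc c m + sc d m) \<and>
     (\<forall>c d m. sc (c * d) m = sc c (sc d m)) \<and>
     (\<forall>m. sc 1 m = m) \<and>
     \<comment> \<open>right C_0(X)-module, compatible with scalars\<close>
     (\<forall>m f g. f \<in> C0 \<longrightarrow> g \<in> C0 \<longrightarrow> act (act m f) g = act m (\<lambda>x. f x * g x)) \<and>
     (\<forall>m f g. f \<in> C0 \<longrightarrow> g \<in> C0 \<longrightarrow> act m (\<lambda>x. f x + g x) = act m f + act m g) \<and>
     (\<forall>m n f. f \<in> C0 \<longrightarrow> act (m + n) f = act m f + act n f) \<and>
     (\<forall>c m f. f \<in> C0 \<longrightarrow> act (sc c m) f = sc c (act m f)) \<and>
     (\<forall>c m f. f \<in> C0 \<longrightarrow> act m (\<lambda>x. c * f x) = sc c (act m f)) \<and>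
     \<comment> \<open>C_0(X)-valued inner product\<close>
     (\<forall>m n. ip m n \<in> C0) \<and>
     (\<forall>m n n'. ip m (n + n') = (\<lambda>x. ip m n x + ip m n' x)) \<and>
     (\<forall>c m n. ip m (sc c n) = (\<lambda>x. c * ip m n x)) \<and>
     (\<forall>m n f. f \<in> C0 \<longrightarrow> ip m (act n f) = (\<lambda>x. ip m n x * f x)) \<and>
     (\<forall>m n. ip n m = (\<lambda>x. cnj (ip m n x))) \<and>
     (\<forall>m x. Im (ip m m x) = 0 \<and> Re (ip m m x) \<ge> 0) \<and>
     (\<forall>m. ip m m = (\<lambda>x. 0) \<longrightarrow> m = 0) \<and>
     \<comment> \<open>completeness for the norm sqrt of the sup-norm of ip m m\<close>
     (\<forall>s :: nat \<Rightarrow> 'm. (\<forall>e>0. \<exists>N. \<forall>i\<ge>N. \<forall>j\<ge>N. hnorm ip (s i - s j) < e) \<longrightarrow>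
         (\<exists>l. (\<lambda>n. hnorm ip (s n - l)) \<longlonglongrightarrow> 0))"

definition hspan :: "(complex \<Rightarrow> 'm::ab_group_add \<Rightarrow> 'm) \<Rightarrow> 'm set \<Rightarrow> 'm set" where
  "hspan sc S = {m. \<exists>(k::nat) c v. (\<forall>i<k. v i \<in> S) \<and> m = (\<Sum>i<k. sc (c i) (v i))}"

definition hclosure :: "('m::ab_group_add \<Rightarrow> 'm \<Rightarrow> 'x \<Rightarrow> complex) \<Rightarrow> 'm set \<Rightarrow> 'm set" where
  "hclosure ip S = {m. \<exists>s :: nat \<Rightarrow> 'm. (\<forall>n. s n \<in> S) \<and> (\<lambda>n. hnorm ip (s n - m)) \<longlonglongrightarrow> 0}"

definition hcspan where
  "hcspan sc ip S = hclosure ip (hspan sc S)"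

definition MC0 where
  "MC0 sc act ip U = hcspan sc ip {act m f | m f. f \<in> C0_on U}"

definition countably_generated where
  "countably_generated sc act ip \<longleftrightarrow>
     (\<exists>G. countable G \<and> hcspan sc ip {act g f | g f. g \<in> G \<and> f \<in> C0} = UNIV)"

definition submodule where
  "submodule sc act F \<longleftrightarrow> 0 \<in> F \<and> (\<forall>a\<in>F. \<forall>b\<in>F. a + b \<in> F) \<and>
     (\<forall>c. \<forall>a\<in>F. sc c a \<in> F) \<and> (\<forall>f\<in>C0. \<forall>a\<in>F. act a f \<in> F)"

definition hperp where
  "hperp ip F = {m. \<forall>n\<in>F. ip n m = (\<lambda>x. 0)}"

end

theory Submission
  imports Defs
begin


lemma Hausdorff_t2: "Hausdorff_space (euclidean :: 'a::t2_space topology)"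
  unfolding Hausdorff_space_def using hausdorff by (fastforce simp: disjnt_def)

lemma urysohn_aux:
  fixes C U :: "'x::t2_space set"
  assumes lc: "locally_compact_space (euclidean::'x topology)" and "compact C" "C \<subseteq> U" "open U"
  obtains g :: "'x \<Rightarrow> real" and L where "continuous_on UNIV g" "compact L" "L \<subseteq> U"
    "\<forall>x\<in>C. g x = 1" "\<forall>x. x \<notin> L \<longrightarrow> g x = 0"
proof -
  have reg: "regular_space (euclidean::'x topology)"
    using lc Hausdorff_t2 locally_compact_Hausdorff_imp_regular_space by blast
  have nb: "neighbourhood_base_of (\<lambda>C. compactin euclidean C \<and> closedin euclidean C) (euclidean::'x topology)"
    using lc reg locally_compact_regular_space_neighbourhood_base by blast
  have "\<forall>x\<in>C. \<exists>W L. open W \<and> compact L \<and> x \<in> W \<and> W \<subseteq> L \<and> L \<subseteq> U"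
  proof
    fix x assume "x \<in> C"
    then have "x \<in> U" using assms by auto
    then obtain W L where "openin euclidean W" "compactin euclidean L" "x \<in> W" "W \<subseteq> L" "L \<subseteq> U"
      using nb assms(4) unfolding neighbourhood_base_of by (metis open_openin)
    then show "\<exists>W L. open W \<and> compact L \<and> x \<in> W \<and> W \<subseteq> L \<and> L \<subseteq> U"
      by (auto simp: compactin_euclidean_iff)
  qed
  then obtain Wf Lf where WL: "\<And>x. x \<in> C \<Longrightarrow> open (Wf x) \<and> compact (Lf x) \<and> x \<in> Wf x \<and> Wf x \<subseteq> Lf x \<and> Lf x \<subseteq> U"
    by metis
  have "C \<subseteq> \<Union> (Wf ` C)" using WL by blast
  then obtain D where D: "D \<subseteq> C" "finite D" "C \<subseteq> \<Union> (Wf ` D)"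
    using compactE_image[OF assms(2), of C Wf] WL by metis
  define W where "W = \<Union> (Wf ` D)"
  define L where "L = \<Union> (Lf ` D)"
  have oW: "open W" using WL D by (auto simp: W_def)
  have cL: "compact L" using WL D by (auto simp: L_def intro!: compact_UN)
  have WL': "W \<subseteq> L" "L \<subseteq> U" using WL D by (auto simp: W_def L_def)
  have crs: "completely_regular_space (euclidean::'x topology)"
    using lc Hausdorff_t2 locally_compact_regular_imp_completely_regular_space by blast
  obtain f where f: "continuous_map euclidean (subtopology euclidean {0..1::real}) f" "f ` (- W) \<subseteq> {0}" "f ` C \<subseteq> {1}"
  proof (rule Urysohn_completely_regular_compact_closed[of 0 1 euclidean C "- W"])
    show "compactin euclidean C" using assms(2) by (simp add: compactin_euclidean_iff)
    show "closedin euclidean (- W)" using oW by (simp add: closed_closedin[symmetric] closed_Compl)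
    show "disjnt C (- W)" using D by (auto simp: W_def disjnt_def)
  qed (use crs in auto)
  show ?thesis
  proof
    show "continuous_on UNIV f" using f(1)
      by (metis continuous_map_iff_continuous2 continuous_map_in_subtopology)
    show "\<forall>x\<in>C. f x = 1" using f by auto
    show "\<forall>x. x \<notin> L \<longrightarrow> f x = 0" using f(2) WL' by blast
  qed (use cL WL' in auto)
qed

lemma real_quad_aux:
  fixes a b q :: real
  assumes "\<And>t. 0 \<le> a - 2*t*q + t^2*q*b" "a \<ge> 0" "b \<ge> 0" "q \<ge> 0"
  shows "q \<le> a * b"
proof (cases "q = 0")
  case True thus ?thesis using assms by simp
next
  case False
  hence qp: "q > 0" using assms by simp
  show ?thesis
  proof (cases "b = 0")
    case True
    have "0 \<le> a - 2*((a+1)/(2*q))*q" using assms(1)[of "(a+1)/(2*q)"] True by simp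
    also have "\<dots> = -1" using qp by (simp add: field_simps)
    finally show ?thesis by simp
  next
    case False
    hence bp: "b > 0" using assms by simp
    have "0 \<le> a - 2*(1/b)*q + (1/b)^2*q*b" using assms(1) by blast
    also have "\<dots> = a - q/b" using bp by (simp add: field_simps power2_eq_square)
    finally show ?thesis using bp by (simp add: field_simps)
  qed
qed

lemma C0_bdd:
  assumes "f \<in> C0"
  shows "bdd_above (range (\<lambda>x. cmod (f x)))"
proof -
  obtain K where K: "compact K" "\<forall>x. x \<notin> K \<longrightarrow> cmod (f x) < 1"
  proof -
    have "\<forall>e>0. \<exists>K. compact K \<and> (\<forall>x. x \<notin> K \<longrightarrow> cmod (f x) < e)"
      using assms unfolding C0_def by blast
    from this[rule_format, of 1] show ?thesis using that by auto
  qed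
  have "continuous_on K f" using assms unfolding C0_def
    using continuous_on_subset by blast
  hence "compact (f ` K)" using K compact_continuous_image by blast
  then obtain B where B: "\<forall>y\<in>f ` K. norm y \<le> B"
    using compact_imp_bounded[of "f ` K"] unfolding bounded_iff by blast
  have "cmod (f x) \<le> max B 1" for x
  proof (cases "x \<in> K")
    case True thus ?thesis using B by force
  next
    case False thus ?thesis using K by force
  qed
  thus ?thesis by (intro bdd_aboveI[of _ "max B 1"]) auto
qed

lemma C0_le_supnorm:
  assumes "f \<in> C0"
  shows "cmod (f x) \<le> supnorm f"
  unfolding supnorm_def using C0_bdd[OF assms] by (intro cSup_upper) auto



context
  fixes sc :: "complex \<Rightarrow> 'm::ab_group_add \<Rightarrow> 'm"
    and act :: "'m \<Rightarrow> ('x::topological_space \<Rightarrow> complex) \<Rightarrow> 'm"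
    and ip :: "'m \<Rightarrow> 'm \<Rightarrow> 'x \<Rightarrow> complex"
  assumes H: "hilbert_C0_module sc act ip"
begin

lemma ip_add: "ip m (n + n') x = ip m n x + ip m n' x"
  using H unfolding hilbert_C0_module_def by metis
lemma ip_sc: "ip m (sc c n) x = c * ip m n x"
  using H unfolding hilbert_C0_module_def by metis
lemma ip_act: "f \<in> C0 \<Longrightarrow> ip m (act n f) x = ip m n x * f x"
  using H unfolding hilbert_C0_module_def by metis
lemma ip_cnj: "ip n m x = cnj (ip m n x)"
  using H unfolding hilbert_C0_module_def by metis
lemma ip_pos: "Im (ip m m x) = 0" "Re (ip m m x) \<ge> 0"
  using H unfolding hilbert_C0_module_def by metis+
lemma ip_C0: "ip m n \<in> C0"
  using H unfolding hilbert_C0_module_def by metis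

lemma ip_zero: "ip m 0 x = 0"
  using ip_add[of m 0 0 x] by simp
lemma ip_diff: "ip m (a - b) x = ip m a x - ip m b x"
  using ip_add[of m "a - b" b x] by simp
lemma ip_add1: "ip (a + b) m x = ip a m x + ip b m x"
  using ip_cnj ip_add by (metis complex_cnj_add)
lemma ip_sc1: "ip (sc c a) m x = cnj c * ip a m x"
  using ip_cnj ip_sc by (metis complex_cnj_mult)

lemma ip_self_real: "ip m m x = of_real (Re (ip m m x))"
  using ip_pos(1)[of m x] by (simp add: complex_eq_iff)

lemma cs: "(cmod (ip m d x))^2 \<le> Re (ip m m x) * Re (ip d d x)"
proof -
  define \<beta> where "\<beta> = ip m d x"
  define q where "q = (cmod \<beta>)^2"
  have cb: "cnj \<beta> * \<beta> = of_real q" unfolding q_def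
    by (metis complex_norm_square mult.commute)
  have cb2: "\<beta> * (cnj \<beta> * y) = of_real q * y" for y
    using cb by (metis mult.assoc mult.commute)
  have "0 \<le> Re (ip m m x) - 2*t*q + t^2*q*Re (ip d d x)" for t :: real
  proof -
    define z where "z = - (of_real t * cnj \<beta>)"
    define u where "u = m + sc z d"
    have "ip u u x = ip m m x + z * \<beta> + cnj z * cnj \<beta> + cnj z * z * ip d d x"
      unfolding u_def \<beta>_def
      by (simp add: ip_add ip_add1 ip_sc ip_sc1 algebra_simps ip_cnj[of d m])
    also have "\<dots> = of_real (Re (ip m m x) - 2*t*q + t^2*q*Re (ip d d x))"
      apply (subst ip_self_real[of m], subst ip_self_real[of d])
      unfolding z_def using cb
      by (simp add: algebra_simps power2_eq_square cb2)
    finally show ?thesis using ip_pos(2)[of u x] by simp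
  qed
  then show ?thesis unfolding q_def[symmetric] \<beta>_def[symmetric]
    by (intro real_quad_aux) (auto simp: ip_pos q_def)
qed

lemma ip_le_hnorm: "Re (ip d d x) \<le> (hnorm ip d)^2"
proof -
  have "cmod (ip d d x) \<le> supnorm (ip d d)" by (rule C0_le_supnorm[OF ip_C0])
  moreover have "cmod (ip d d x) = Re (ip d d x)"
    using ip_pos[of d x] by (simp add: cmod_eq_Re)
  ultimately show ?thesis using ip_pos(2)[of d x] unfolding hnorm_def by simp
qed

lemma hnorm_nonneg: "hnorm ip d \<ge> 0"
  unfolding hnorm_def
  by (rule real_sqrt_ge_zero, rule order_trans[OF norm_ge_zero C0_le_supnorm[OF ip_C0, of d d undefined]])

lemma cmod_ip_le: "cmod (ip m d x) \<le> sqrt (Re (ip m m x)) * hnorm ip d"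
proof -
  have "(cmod (ip m d x))^2 \<le> Re (ip m m x) * (hnorm ip d)^2"
    using cs[of m d x] ip_le_hnorm[of d x] ip_pos(2)[of m x]
    by (meson mult_left_mono order_trans)
  also have "\<dots> = (sqrt (Re (ip m m x)) * hnorm ip d)^2"
    using ip_pos(2)[of m x] by (simp add: power_mult_distrib)
  finally show ?thesis
    using hnorm_nonneg[of d] ip_pos(2)[of m x]
    by (meson power2_le_imp_le mult_nonneg_nonneg real_sqrt_ge_zero)
qed

lemma ip_sum: "ip m' (\<Sum>i<(k::nat). sc (c i) (v i)) x = (\<Sum>i<k. c i * ip m' (v i) x)"
  by (induction k) (simp_all add: ip_zero ip_add ip_sc)

lemma span_vanish:
  assumes "x \<notin> V" "n \<in> hspan sc {act m f | m f. f \<in> C0_on V}"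
  shows "ip m' n x = 0"
proof -
  obtain k :: nat and c v where kv: "\<forall>i<k. v i \<in> {act m f | m f. f \<in> C0_on V}" "n = (\<Sum>i<k. sc (c i) (v i))"
    using assms(2) unfolding hspan_def by blast
  have "ip m' (v i) x = 0" if ik: "i < k" for i
  proof -
    obtain m f where "v i = act m f" "f \<in> C0_on V" using kv(1) ik by blast
    thus ?thesis using assms(1) ip_act[of f m' m x] unfolding C0_on_def by auto
  qed
  thus ?thesis unfolding kv(2) ip_sum by simp
qed

lemma MC0_vanish:
  assumes "x \<notin> V" "n \<in> MC0 sc act ip V"
  shows "ip m' n x = 0"
proof -
  obtain s where s: "\<And>k. s k \<in> hspan sc {act m f | m f. f \<in> C0_on V}"
    "(\<lambda>k. hnorm ip (s k - n)) \<longlonglongrightarrow> 0"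
    using assms(2) unfolding MC0_def hcspan_def hclosure_def by blast
  define A where "A = sqrt (Re (ip m' m' x))"
  have le: "cmod (ip m' n x) \<le> A * hnorm ip (s k - n)" for k
  proof -
    have "ip m' n x = ip m' (s k) x - ip m' (s k - n) x" by (simp add: ip_diff)
    also have "\<dots> = - ip m' (s k - n) x" using span_vanish[OF assms(1) s(1)] by simp
    finally show ?thesis using cmod_ip_le[of m' "s k - n" x] unfolding A_def by simp
  qed
  have "(\<lambda>k. A * hnorm ip (s k - n)) \<longlonglongrightarrow> A * 0"
    by (intro tendsto_mult tendsto_const s(2))
  hence "cmod (ip m' n x) \<le> 0"
    using LIMSEQ_le_const[of "\<lambda>k. A * hnorm ip (s k - n)" "A * 0" "cmod (ip m' n x)"] le by auto
  thus ?thesis by simp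
qed

lemma hnorm_zero: "hnorm ip 0 = 0"
proof -
  have "ip 0 0 = (\<lambda>x. 0)" by (rule ext) (simp add: ip_zero)
  thus ?thesis unfolding hnorm_def supnorm_def by simp
qed

end

theorem lemma6p8:
  fixes sc :: "complex \<Rightarrow> 'm::ab_group_add \<Rightarrow> 'm"
    and act :: "'m \<Rightarrow> ('x::t2_space \<Rightarrow> complex) \<Rightarrow> 'm"
    and ip :: "'m \<Rightarrow> 'm \<Rightarrow> 'x \<Rightarrow> complex"
    and U V :: "'x set" and F :: "'m set"
  assumes "locally_compact_space (euclidean :: 'x topology)"
    and "hilbert_C0_module sc act ip"
    and "countably_generated sc act ip"
    and "open U" and "sigma_compact U"
    and "open V" and "sigma_compact V"
    and "compact (closure V)" and "closure V \<subseteq> U"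
    and "submodule sc act F"
    and "F \<subseteq> MC0 sc act ip V"
    and "MC0 sc act ip U = {a + b | a b. a \<in> F \<and> b \<in> hperp ip F \<inter> MC0 sc act ip U}"
  shows "UNIV = {a + b | a b. a \<in> F \<and> b \<in> hperp ip F}"
proof -
  note H = assms(2)
  obtain g :: "'x \<Rightarrow> real" and L where g: "continuous_on UNIV g" "compact L" "L \<subseteq> U"
    "\<forall>x\<in>closure V. g x = 1" "\<forall>x. x \<notin> L \<longrightarrow> g x = 0"
    using urysohn_aux[OF assms(1) assms(8) assms(9) assms(4)] by metis
  define gc where "gc = (\<lambda>x. complex_of_real (g x))"
  have gcC0: "gc \<in> C0"
    unfolding C0_def gc_def
  proof (intro CollectI conjI allI impI)
    show "continuous_on UNIV (\<lambda>x. complex_of_real (g x))"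
      using g(1) by (intro continuous_intros)
    fix e :: real assume "e > 0"
    thus "\<exists>K. compact K \<and> (\<forall>x. x \<notin> K \<longrightarrow> cmod (complex_of_real (g x)) < e)"
      using g(2,5) by auto
  qed
  have gcU: "gc \<in> C0_on U" unfolding C0_on_def using gcC0 g(3,5) by (auto simp: gc_def)
  have gcV: "gc x = 1" if "x \<in> V" for x
    using g(4) closure_subset that by (auto simp: gc_def)
  show ?thesis
  proof (intro set_eqI iffI)
    fix m :: 'm
    have "act m gc \<in> hspan sc {act m f | m f. f \<in> C0_on U}"
      unfolding hspan_def
      by (intro CollectI exI[of _ "1::nat"] exI[of _ "\<lambda>_. 1"] exI[of _ "\<lambda>_. act m gc"])
         (use gcU H in \<open>auto simp: hilbert_C0_module_def\<close>)
    hence "act m gc \<in> MC0 sc act ip U"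
      unfolding MC0_def hcspan_def hclosure_def
      by (intro CollectI exI[of _ "\<lambda>_. act m gc"]) (auto simp: hnorm_zero[OF H])
    then obtain a b where ab: "act m gc = a + b" "a \<in> F" "b \<in> hperp ip F"
      using assms(12) by blast
    have "m - a \<in> hperp ip F"
      unfolding hperp_def
    proof (intro CollectI ballI ext)
      fix n x assume nF: "n \<in> F"
      have nm: "ip n m x * gc x = ip n m x"
      proof (cases "x \<in> V")
        case True thus ?thesis using gcV by simp
      next
        case False
        have "ip m n x = 0" using MC0_vanish[OF H False] nF assms(11) by blast
        hence "ip n m x = 0" using ip_cnj[OF H, of n m x] by simp
        thus ?thesis by simp
      qed
      have "ip n (act m gc) x = ip n a x + ip n b x" using ab(1) ip_add[OF H] by simp
      also have "ip n b x = 0" using ab(3) nF unfolding hperp_def by simp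
      finally have "ip n m x = ip n a x"
        using ip_act[OF H gcC0, of n m x] nm by simp
      thus "ip n (m - a) x = 0" using ip_diff[OF H] by simp
    qed
    moreover have "m = a + (m - a)" by simp
    ultimately show "m \<in> {a + b | a b. a \<in> F \<and> b \<in> hperp ip F}" using ab(2) by blast
  qed simp
qed

end
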